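(* Let $S$ be the group defined in the context. Then $S$ contains no subgroup isomorphic to $(\mathbb{Z}/2)^5$. The group $S$ contains exactly eight subgroups isomorphic to $(\mathbb{Z}/2)^4$. These form three conjugacy classes in $S$: two classes contain two subgroups each, and one class contains four subgroups.
   Context: Let $S$ be the group generated by $v_1,v_2,v_3,s,t$, where $v_1,v_2,v_3$ commute, each has order $4$, and together generate $(\mathbb{Z}/4)^3$. The elements $s,t$ generate $D_8=\langle t,s\mid t^2=s^4=(ts)^2=1\rangle$, which acts on $(\mathbb{Z}/4)^3$ by conjugation. Writing $x^y=yxy^{-1}$, the action is $$v_1^t=v_3^{-1},\quad v_2^t=v_2^{-1},\quad v_1^s=v_2,\quad v_2^s=v_3,\quad v_3^s=v_2^{-1}v_1v_3.$$ So $S=(\mathbb{Z}/4)^3\rtimes D_8$ has order $2^9$. *)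

theory Defs
  imports "HOL-Algebra.Algebra" "HOL-Library.Multiset"
begin

(* Concrete model of S = (Z/4)^3 \<rtimes> D_8.
   An element ((a,b,c),(i,j)) with a,b,c \<in> {0..3}, i \<in> {0..3}, j \<in> {0,1}
   stands for  v1^a v2^b v3^c s^i t^j.
   The action of D_8 on (Z/4)^3 (written additively, coordinates w.r.t. v1,v2,v3):
     s: v1 \<mapsto> v2, v2 \<mapsto> v3, v3 \<mapsto> v1 - v2 + v3
     t: v1 \<mapsto> -v3, v2 \<mapsto> -v2, v3 \<mapsto> -v1   (forced by t^2 = 1 and v1^t = v3^{-1}) *)

definition actS :: "int \<times> int \<times> int \<Rightarrow> int \<times> int \<times> int" where
  "actS = (\<lambda>(a, b, c). (c, a - c, b + c))"

definition actT :: "int \<times> int \<times> int \<Rightarrow> int \<times> int \<times> int" where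
  "actT = (\<lambda>(a, b, c). (- c, - b, - a))"

definition rho :: "int \<Rightarrow> int \<Rightarrow> int \<times> int \<times> int \<Rightarrow> int \<times> int \<times> int" where
  "rho i j w = (actS ^^ nat i) ((actT ^^ nat j) w)"

definition vadd4 :: "int \<times> int \<times> int \<Rightarrow> int \<times> int \<times> int \<Rightarrow> int \<times> int \<times> int" where
  "vadd4 = (\<lambda>(a, b, c) (a', b', c'). ((a + a') mod 4, (b + b') mod 4, (c + c') mod 4))"

(* semidirect product multiplication: (v g)(w h) = (v + g.w)(g h),
   dihedral part: s^i t^j s^k t^l = s^(i + (-1)^j k) t^(j + l) *)
definition S_mult :: "(int \<times> int \<times> int) \<times> int \<times> int \<Rightarrow> (int \<times> int \<times> int) \<times> int \<times> int
                      \<Rightarrow> (int \<times> int \<times> int) \<times> int \<times> int" where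
  "S_mult = (\<lambda>(v, i, j) (w, k, l).
      (vadd4 v (rho i j w), (i + (-1) ^ nat j * k) mod 4, (j + l) mod 2))"

definition S_grp :: "((int \<times> int \<times> int) \<times> int \<times> int) monoid" where
  "S_grp = \<lparr> carrier = ({0..<4} \<times> {0..<4} \<times> {0..<4}) \<times> {0..<4} \<times> {0..<2},
             monoid.mult = S_mult,
             one = ((0, 0, 0), 0, 0) \<rparr>"

definition gen_v1 :: "(int \<times> int \<times> int) \<times> int \<times> int" where "gen_v1 = ((1,0,0),0,0)"
definition gen_v2 :: "(int \<times> int \<times> int) \<times> int \<times> int" where "gen_v2 = ((0,1,0),0,0)"
definition gen_v3 :: "(int \<times> int \<times> int) \<times> int \<times> int" where "gen_v3 = ((0,0,1),0,0)"
definition gen_s :: "(int \<times> int \<times> int) \<times> int \<times> int" where "gen_s = ((0,0,0),1,0)"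
definition gen_t :: "(int \<times> int \<times> int) \<times> int \<times> int" where "gen_t = ((0,0,0),0,1)"

definition elem_ab2 :: "nat \<Rightarrow> (nat \<Rightarrow> int) monoid" where
  "elem_ab2 n = product_group {..<n} (\<lambda>_. integer_mod_group 2)"

definition subgroups_iso :: "('a, 'b) monoid_scheme \<Rightarrow> ('c, 'd) monoid_scheme \<Rightarrow> 'a set set" where
  "subgroups_iso G A = {H. subgroup H G \<and> is_iso (G\<lparr>carrier := H\<rparr>) A}"

definition conj_class :: "('a, 'b) monoid_scheme \<Rightarrow> 'a set \<Rightarrow> 'a set set" where
  "conj_class G H = {l_coset G g (r_coset G H (inv\<^bsub>G\<^esub> g)) | g. g \<in> carrier G}"

end

theory Submission
  imports Defs
begin

definition red :: "int \<times> int \<times> int \<Rightarrow> int \<times> int \<times> int" where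
  "red = (\<lambda>(a, b, c). (a mod 4, b mod 4, c mod 4))"
definition vp :: "int \<times> int \<times> int \<Rightarrow> int \<times> int \<times> int \<Rightarrow> int \<times> int \<times> int" where
  "vp = (\<lambda>(a, b, c) (a', b', c'). (a + a', b + b', c + c'))"

lemma vadd4_red: "vadd4 v w = red (vp v w)"
  by (cases v; cases w) (simp add: vadd4_def red_def vp_def)

lemma red_red[simp]: "red (red x) = red x"
  by (cases x) (simp add: red_def)

lemma red_vp1[simp]: "red (vp (red x) y) = red (vp x y)"
  by (cases x; cases y) (simp add: red_def vp_def mod_simps)
lemma red_vp2[simp]: "red (vp x (red y)) = red (vp x y)"
  by (cases x; cases y) (simp add: red_def vp_def mod_simps)

lemma vp_assoc: "vp (vp x y) z = vp x (vp y z)"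
  by (cases x; cases y; cases z) (simp add: vp_def)

lemma actS_red: "red (actS (red x)) = red (actS x)"
  by (cases x) (simp add: red_def actS_def mod_simps)
lemma actT_red: "red (actT (red x)) = red (actT x)"
  by (cases x) (simp add: red_def actT_def mod_simps)

lemma funpow_red:
  assumes "\<And>x. red (f (red x)) = red (f x)"
  shows "red ((f ^^ n) (red x)) = red ((f ^^ n) x)"
proof (induction n)
  case 0 then show ?case by simp
next
  case (Suc n)
  have "red ((f ^^ Suc n) (red x)) = red (f (red ((f ^^ n) (red x))))" by (simp add: assms)
  also have "\<dots> = red (f (red ((f ^^ n) x)))" using Suc by simp
  also have "\<dots> = red ((f ^^ Suc n) x)" by (simp add: assms)
  finally show ?case .
qed

lemma rho_red: "red (rho i j (red x)) = red (rho i j x)"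
proof -
  have "red (rho i j (red x)) = red ((actS ^^ nat i) (red ((actT ^^ nat j) (red x))))"
    unfolding rho_def by (rule funpow_red[where f=actS, OF actS_red, symmetric])
  also have "\<dots> = red ((actS ^^ nat i) (red ((actT ^^ nat j) x)))"
    by (simp add: funpow_red[where f=actT, OF actT_red])
  also have "\<dots> = red (rho i j x)"
    unfolding rho_def by (rule funpow_red[where f=actS, OF actS_red])
  finally show ?thesis .
qed

lemma actS_vp: "actS (vp x y) = vp (actS x) (actS y)"
  by (cases x; cases y) (simp add: actS_def vp_def)
lemma actT_vp: "actT (vp x y) = vp (actT x) (actT y)"
  by (cases x; cases y) (simp add: actT_def vp_def)

lemma funpow_vp:
  assumes "\<And>x y. f (vp x y) = vp (f x) (f y)"
  shows "(f ^^ n) (vp x y) = vp ((f ^^ n) x) ((f ^^ n) y)"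
  by (induction n) (simp_all add: assms)

lemma rho_vp: "rho i j (vp x y) = vp (rho i j x) (rho i j y)"
  unfolding rho_def by (simp add: funpow_vp[where f=actS, OF actS_vp] funpow_vp[where f=actT, OF actT_vp])

definition dm :: "int \<times> int \<Rightarrow> int \<times> int \<Rightarrow> int \<times> int" where
  "dm = (\<lambda>(i, j) (k, l). ((i + (-1) ^ nat j * k) mod 4, (j + l) mod 2))"

lemma S_mult_eq: "S_mult (v, d) (w, e) = (vadd4 v (rho (fst d) (snd d) w), dm d e)"
  by (cases d; cases e) (simp add: S_mult_def dm_def)

lemma range4: "(i::int) \<in> {0..<4} \<longleftrightarrow> i = 0 \<or> i = 1 \<or> i = 2 \<or> i = 3" by auto
lemma range2: "(i::int) \<in> {0..<2} \<longleftrightarrow> i = 0 \<or> i = 1" by auto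

lemma rho_comp:
  assumes "i \<in> {0..<4}" "j \<in> {0..<2}" "k \<in> {0..<4}" "l \<in> {0..<2}"
  shows "rho i j (rho k l w) = rho (fst (dm (i,j) (k,l))) (snd (dm (i,j) (k,l))) w"
  using assms unfolding range4 range2
  by (cases w) (elim disjE; simp add: rho_def actS_def actT_def dm_def numeral_eq_Suc)

definition DR :: "(int \<times> int) set" where "DR = {0..<4} \<times> {0..<2}"

lemma dm_closed: "dm d e \<in> DR"
  by (cases d; cases e) (simp add: dm_def DR_def)

lemma dm_assoc: assumes "d1 \<in> DR" "d2 \<in> DR" "d3 \<in> DR" shows "dm (dm d1 d2) d3 = dm d1 (dm d2 d3)"
proof -
  obtain i j k l m n where d: "d1 = (i,j)" "d2 = (k,l)" "d3 = (m,n)" by (cases d1; cases d2; cases d3)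
  with assms have "j = 0 \<or> j = 1" "l = 0 \<or> l = 1" by (auto simp: DR_def)
  then show ?thesis unfolding d
    by (elim disjE) (simp_all add: dm_def mod_simps algebra_simps)
qed

lemma dm_one: "d \<in> DR \<Longrightarrow> dm (0,0) d = d"
  unfolding DR_def by (cases d) (auto simp: dm_def)

lemma rho_comp': "d1 \<in> DR \<Longrightarrow> d2 \<in> DR \<Longrightarrow> rho (fst d1) (snd d1) (rho (fst d2) (snd d2) w) = rho (fst (dm d1 d2)) (snd (dm d1 d2)) w"
  unfolding DR_def by (cases d1; cases d2) (simp add: rho_comp)

lemma VR_iff: "v \<in> {0..<4} \<times> {0..<4} \<times> {0..<4} \<longleftrightarrow> red v = v"
  by (cases v) (auto simp: red_def)

lemma carrier_S: "carrier S_grp = ({0..<4} \<times> {0..<4} \<times> {0..<4}) \<times> DR"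
  by (simp add: S_grp_def DR_def)

lemma mult_S: "x \<otimes>\<^bsub>S_grp\<^esub> y = S_mult x y"
  by (simp add: S_grp_def)
lemma one_S: "\<one>\<^bsub>S_grp\<^esub> = ((0,0,0),0,0)"
  by (simp add: S_grp_def)

lemma red_vadd4[simp]: "red (vadd4 v w) = vadd4 v w"
  by (simp add: vadd4_red)

lemma S_assoc:
  assumes "d1 \<in> DR" "d2 \<in> DR" "d3 \<in> DR"
  shows "S_mult (S_mult (u, d1) (v, d2)) (w, d3) = S_mult (u, d1) (S_mult (v, d2) (w, d3))"
proof -
  let ?r = "\<lambda>d. rho (fst d) (snd d)"
  have "vadd4 (vadd4 u (?r d1 v)) (?r (dm d1 d2) w) = red (vp (vp u (?r d1 v)) (?r (dm d1 d2) w))"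
    by (simp add: vadd4_red)
  also have "\<dots> = red (vp u (vp (?r d1 v) (?r d1 (?r d2 w))))"
    using assms by (simp add: rho_comp' vp_assoc)
  also have "\<dots> = red (vp u (red (?r d1 (red (vp v (?r d2 w))))))"
    by (simp add: rho_red rho_vp)
  also have "\<dots> = vadd4 u (?r d1 (vadd4 v (?r d2 w)))"
    by (simp add: vadd4_red)
  finally show ?thesis using assms
    by (simp add: S_mult_eq dm_assoc)
qed

lemma group_S: "group S_grp"
proof (rule groupI)
  fix x y assume "x \<in> carrier S_grp" "y \<in> carrier S_grp"
  then show "x \<otimes>\<^bsub>S_grp\<^esub> y \<in> carrier S_grp"
    by (cases x; cases y) (auto simp: carrier_S mult_S S_mult_eq dm_closed VR_iff simp del: mem_Times_iff)
next
  show "\<one>\<^bsub>S_grp\<^esub> \<in> carrier S_grp" by (simp add: carrier_S one_S DR_def)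
next
  fix x y z assume "x \<in> carrier S_grp" "y \<in> carrier S_grp" "z \<in> carrier S_grp"
  then show "x \<otimes>\<^bsub>S_grp\<^esub> y \<otimes>\<^bsub>S_grp\<^esub> z = x \<otimes>\<^bsub>S_grp\<^esub> (y \<otimes>\<^bsub>S_grp\<^esub> z)"
    by (cases x; cases y; cases z) (simp add: carrier_S mult_S S_assoc)
next
  fix x assume "x \<in> carrier S_grp"
  then obtain v d where x: "x = (v, d)" "red v = v" "d \<in> DR"
    by (cases x) (auto simp: carrier_S VR_iff)
  have "vadd4 (0,0,0) (rho 0 0 v) = v" using x
    by (cases v) (simp add: vadd4_def rho_def red_def)
  then show "\<one>\<^bsub>S_grp\<^esub> \<otimes>\<^bsub>S_grp\<^esub> x = x"
    using x by (simp add: one_S mult_S S_mult_eq dm_one)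
next
  fix x assume "x \<in> carrier S_grp"
  then obtain v i j where x: "x = (v, i, j)" "red v = v" "(i,j) \<in> DR"
    by (cases x) (auto simp: carrier_S VR_iff)
  define e where "e = (if j = 0 then ((- i) mod 4, 0::int) else (i, 1))"
  have e: "e \<in> DR" "dm e (i,j) = (0,0)"
    proof -
    have "j = 0 \<or> j = 1" using x(3) by (auto simp: DR_def)
    then show "e \<in> DR" "dm e (i,j) = (0,0)"
      using x(3) by (auto simp: e_def DR_def dm_def mod_simps)
  qed
  let ?r = "rho (fst e) (snd e) v"
  define y where "y = (red (case ?r of (a,b,c) \<Rightarrow> (-a,-b,-c)), e)"
  have "vadd4 (red (case ?r of (a,b,c) \<Rightarrow> (-a,-b,-c))) ?r = (0,0,0)"
    by (cases ?r) (simp add: vadd4_def red_def mod_simps)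
  then have "y \<otimes>\<^bsub>S_grp\<^esub> x = \<one>\<^bsub>S_grp\<^esub>"
    using e x by (simp add: y_def mult_S S_mult_eq one_S)
  moreover have "y \<in> carrier S_grp"
    using e by (simp add: y_def carrier_S VR_iff del: mem_Times_iff)
  ultimately show "\<exists>y\<in>carrier S_grp. y \<otimes>\<^bsub>S_grp\<^esub> x = \<one>\<^bsub>S_grp\<^esub>" by blast
qed

definition pw :: "('a,'b) monoid_scheme \<Rightarrow> 'a \<Rightarrow> int \<Rightarrow> 'a" where
  "pw G g i = (if i = 0 then \<one>\<^bsub>G\<^esub> else g)"

definition span4 :: "('a,'b) monoid_scheme \<Rightarrow> 'a \<Rightarrow> 'a \<Rightarrow> 'a \<Rightarrow> 'a \<Rightarrow> 'a set" where
  "span4 G a b c d = set [pw G a i \<otimes>\<^bsub>G\<^esub> (pw G b j \<otimes>\<^bsub>G\<^esub> (pw G c k \<otimes>\<^bsub>G\<^esub> pw G d l)).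
      i \<leftarrow> [0,1], j \<leftarrow> [0,1], k \<leftarrow> [0,1], l \<leftarrow> [0,1]]"

definition phi4 :: "('a,'b) monoid_scheme \<Rightarrow> 'a \<Rightarrow> 'a \<Rightarrow> 'a \<Rightarrow> 'a \<Rightarrow> (nat \<Rightarrow> int) \<Rightarrow> 'a" where
  "phi4 G a b c d f = pw G a (f 0) \<otimes>\<^bsub>G\<^esub> (pw G b (f 1) \<otimes>\<^bsub>G\<^esub> (pw G c (f 2) \<otimes>\<^bsub>G\<^esub> pw G d (f 3)))"

definition mk4 :: "int \<Rightarrow> int \<Rightarrow> int \<Rightarrow> int \<Rightarrow> nat \<Rightarrow> int" where
  "mk4 i j k l = (\<lambda>n\<in>{..<4}. if n = 0 then i else if n = 1 then j else if n = 2 then k else l)"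

lemma span4_iff: "x \<in> span4 G a b c d \<longleftrightarrow> (\<exists>i\<in>{0,1}. \<exists>j\<in>{0,1}. \<exists>k\<in>{0,1}. \<exists>l\<in>{0,1}.
   x = pw G a i \<otimes>\<^bsub>G\<^esub> (pw G b j \<otimes>\<^bsub>G\<^esub> (pw G c k \<otimes>\<^bsub>G\<^esub> pw G d l)))"
  unfolding span4_def by auto

lemma range2': "(x::int) \<in> {0..<2} \<longleftrightarrow> x \<in> {0,1}" by auto

lemma carrier_E4: "carrier (elem_ab2 4) = (\<Pi>\<^sub>E i\<in>{..<4}. {0..<2})"
  by (simp add: elem_ab2_def carrier_integer_mod_group)

lemma group_E: "group (elem_ab2 n)"
  by (simp add: elem_ab2_def)

lemma span4_image: "span4 G a b c d = phi4 G a b c d ` carrier (elem_ab2 4)"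
proof
  show "span4 G a b c d \<subseteq> phi4 G a b c d ` carrier (elem_ab2 4)"
  proof
    fix x assume "x \<in> span4 G a b c d"
    then obtain i j k l where ijkl: "i\<in>{0,1}" "j\<in>{0,1}" "k\<in>{0,1}" "l\<in>{0,1}" and
      x: "x = pw G a i \<otimes>\<^bsub>G\<^esub> (pw G b j \<otimes>\<^bsub>G\<^esub> (pw G c k \<otimes>\<^bsub>G\<^esub> pw G d l))"
      by (auto simp: span4_iff)
    have "mk4 i j k l \<in> carrier (elem_ab2 4)" using ijkl by (auto simp: carrier_E4 mk4_def)
    moreover have "phi4 G a b c d (mk4 i j k l) = x" by (simp add: x phi4_def mk4_def)
    ultimately show "x \<in> phi4 G a b c d ` carrier (elem_ab2 4)" by (metis imageI)
  qed
next
  show "phi4 G a b c d ` carrier (elem_ab2 4) \<subseteq> span4 G a b c d"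
  proof
    fix x assume "x \<in> phi4 G a b c d ` carrier (elem_ab2 4)"
    then obtain f where f: "f \<in> carrier (elem_ab2 4)" "x = phi4 G a b c d f" by auto
    have "f 0 \<in> {0,1}" "f 1 \<in> {0,1}" "f 2 \<in> {0,1}" "f 3 \<in> {0,1}"
      using f(1) unfolding carrier_E4 PiE_iff range2' by auto
    then show "x \<in> span4 G a b c d" unfolding span4_iff f(2) phi4_def by blast
  qed
qed

definition cent :: "('a,'b) monoid_scheme \<Rightarrow> 'a set \<Rightarrow> 'a set" where
  "cent G A = {x \<in> carrier G. \<forall>y\<in>A. x \<otimes>\<^bsub>G\<^esub> y = y \<otimes>\<^bsub>G\<^esub> x}"

lemma (in monoid) cent_mult:
  assumes "x \<in> cent G A" "y \<in> cent G A" "A \<subseteq> carrier G"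
  shows "x \<otimes> y \<in> cent G A"
proof -
  have "x \<otimes> y \<otimes> z = z \<otimes> (x \<otimes> y)" if "z \<in> A" for z
  proof -
    have z: "z \<in> carrier G" using that assms(3) by auto
    have xc: "x \<in> carrier G" "y \<in> carrier G" using assms by (auto simp: cent_def)
    have "x \<otimes> y \<otimes> z = x \<otimes> (y \<otimes> z)" using xc z by (simp add: m_assoc)
    also have "\<dots> = x \<otimes> (z \<otimes> y)" using assms(2) that by (simp add: cent_def)
    also have "\<dots> = (x \<otimes> z) \<otimes> y" using xc z by (simp add: m_assoc)
    also have "\<dots> = (z \<otimes> x) \<otimes> y" using assms(1) that by (simp add: cent_def)
    also have "\<dots> = z \<otimes> (x \<otimes> y)" using xc z by (simp add: m_assoc)
    finally show ?thesis .
  qed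
  then show ?thesis using assms by (auto simp: cent_def)
qed

lemma (in monoid) comm_cent2:
  assumes "A \<subseteq> carrier G" "\<forall>x\<in>A. \<forall>y\<in>A. x \<otimes> y = y \<otimes> x"
  shows "comm_monoid (G\<lparr>carrier := cent G (cent G A)\<rparr>)"
proof -
  have c1: "cent G A \<subseteq> carrier G" by (auto simp: cent_def)
  have Ac: "A \<subseteq> cent G A" using assms by (auto simp: cent_def)
  have sub: "cent G (cent G A) \<subseteq> cent G A"
    using Ac by (auto simp: cent_def)
  show ?thesis
  proof (rule comm_monoidI, simp_all)
    fix x y assume "x \<in> cent G (cent G A)" "y \<in> cent G (cent G A)"
    then show "x \<otimes> y \<in> cent G (cent G A)" using cent_mult c1 by blast
  next
    show "\<one> \<in> cent G (cent G A)" using c1 by (auto simp: cent_def)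
  next
    fix x y z assume "x \<in> cent G (cent G A)" "y \<in> cent G (cent G A)" "z \<in> cent G (cent G A)"
    then show "x \<otimes> y \<otimes> z = x \<otimes> (y \<otimes> z)" by (auto simp: cent_def m_assoc)
  next
    fix x assume "x \<in> cent G (cent G A)"
    then show "\<one> \<otimes> x = x" by (auto simp: cent_def)
  next
    fix x y assume "x \<in> cent G (cent G A)" "y \<in> cent G (cent G A)"
    then show "x \<otimes> y = y \<otimes> x" using sub by (auto simp: cent_def)
  qed
qed

lemma (in comm_monoid) rearr4:
  assumes "x1 \<in> carrier G" "x2 \<in> carrier G" "x3 \<in> carrier G" "x4 \<in> carrier G"
          "y1 \<in> carrier G" "y2 \<in> carrier G" "y3 \<in> carrier G" "y4 \<in> carrier G"
  shows "(x1 \<otimes> y1) \<otimes> ((x2 \<otimes> y2) \<otimes> ((x3 \<otimes> y3) \<otimes> (x4 \<otimes> y4))) =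
         (x1 \<otimes> (x2 \<otimes> (x3 \<otimes> x4))) \<otimes> (y1 \<otimes> (y2 \<otimes> (y3 \<otimes> y4)))"
  using assms by (simp add: m_ac)

lemma span4_subgroup_iso:
  fixes G (structure)
  assumes grp: "group G"
  and car: "a \<in> carrier G" "b \<in> carrier G" "c \<in> carrier G" "d \<in> carrier G"
  and sq: "a \<otimes>\<^bsub>G\<^esub> a = \<one>\<^bsub>G\<^esub>" "b \<otimes>\<^bsub>G\<^esub> b = \<one>\<^bsub>G\<^esub>"
          "c \<otimes>\<^bsub>G\<^esub> c = \<one>\<^bsub>G\<^esub>" "d \<otimes>\<^bsub>G\<^esub> d = \<one>\<^bsub>G\<^esub>"
  and cm: "a \<otimes>\<^bsub>G\<^esub> b = b \<otimes>\<^bsub>G\<^esub> a" "a \<otimes>\<^bsub>G\<^esub> c = c \<otimes>\<^bsub>G\<^esub> a"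
          "a \<otimes>\<^bsub>G\<^esub> d = d \<otimes>\<^bsub>G\<^esub> a" "b \<otimes>\<^bsub>G\<^esub> c = c \<otimes>\<^bsub>G\<^esub> b"
          "b \<otimes>\<^bsub>G\<^esub> d = d \<otimes>\<^bsub>G\<^esub> b" "c \<otimes>\<^bsub>G\<^esub> d = d \<otimes>\<^bsub>G\<^esub> c"
  and cd: "card (span4 G a b c d) = 16"
  shows "subgroup (span4 G a b c d) G \<and> G\<lparr>carrier := span4 G a b c d\<rparr> \<cong> elem_ab2 4"
proof -
  interpret group G by fact
  define A where "A = {a,b,c,d}"
  define Z where "Z = cent G (cent G A)"
  define E where "E = elem_ab2 4"
  define T where "T = span4 G a b c d"
  let ?phi = "phi4 G a b c d"
  have Asub: "A \<subseteq> carrier G" using car by (auto simp: A_def)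
  have Acomm: "\<forall>x\<in>A. \<forall>y\<in>A. x \<otimes> y = y \<otimes> x" using cm by (auto simp: A_def)
  have cmZ: "comm_monoid (G\<lparr>carrier := Z\<rparr>)" unfolding Z_def by (rule comm_cent2[OF Asub Acomm])
  have AZ: "x \<in> Z" if "x \<in> A" for x
    using that Asub by (auto simp: Z_def cent_def)
  have oneZ: "\<one> \<in> Z" by (auto simp: Z_def cent_def)
  have pwZ: "pw G g i \<in> Z" if "g \<in> A" for g i
    using AZ oneZ that by (simp add: pw_def)
  have Zcar: "Z \<subseteq> carrier G" by (auto simp: Z_def cent_def)
  have pw_add: "pw G g ((i + j) mod 2) = pw G g i \<otimes> pw G g j"
    if "g \<in> A" "i \<in> {0,1}" "j \<in> {0,1}" for g i j
  proof -
    have "g \<otimes> g = \<one>" using that(1) sq by (auto simp: A_def)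
    then show ?thesis using that Asub by (auto simp: pw_def)
  qed
  have multE: "f \<otimes>\<^bsub>E\<^esub> g = (\<lambda>i\<in>{..<4}. (f i + g i) mod 2)" for f g
    by (simp add: E_def elem_ab2_def)
  have carE: "carrier E = (\<Pi>\<^sub>E i\<in>{..<4}. {0..<2})" by (simp add: E_def carrier_E4)
  have vals: "f 0 \<in> {0,1}" "f 1 \<in> {0,1}" "f 2 \<in> {0,1}" "f 3 \<in> {0,1}" if "f \<in> carrier E" for f
    using that unfolding carE PiE_iff range2' by auto
  have phiZ: "?phi f \<in> Z" for f
    using monoid.m_closed[OF comm_monoid.axioms(1)[OF cmZ]] pwZ by (simp add: phi4_def A_def)
  have hom: "?phi (f \<otimes>\<^bsub>E\<^esub> g) = ?phi f \<otimes> ?phi g" if "f \<in> carrier E" "g \<in> carrier E" for f g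
  proof -
    have "?phi (f \<otimes>\<^bsub>E\<^esub> g) = (pw G a (f 0) \<otimes> pw G a (g 0)) \<otimes> ((pw G b (f 1) \<otimes> pw G b (g 1)) \<otimes>
        ((pw G c (f 2) \<otimes> pw G c (g 2)) \<otimes> (pw G d (f 3) \<otimes> pw G d (g 3))))"
      using vals[OF that(1)] vals[OF that(2)] by (simp add: multE phi4_def pw_add A_def)
    also have "\<dots> = ?phi f \<otimes> ?phi g"
      using comm_monoid.rearr4[OF cmZ, of "pw G a (f 0)" "pw G b (f 1)" "pw G c (f 2)" "pw G d (f 3)"
          "pw G a (g 0)" "pw G b (g 1)" "pw G c (g 2)" "pw G d (g 3)"] pwZ
      by (simp add: phi4_def A_def)
    finally show ?thesis .
  qed
  have img: "?phi ` carrier E = T" by (simp add: T_def E_def span4_image)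
  have Tcar: "T \<subseteq> carrier G" using img phiZ Zcar by auto
  have finE: "finite (carrier E)" by (simp add: carE finite_PiE)
  have cardE: "card (carrier E) = 16" by (simp add: carE card_PiE)
  have inj: "inj_on ?phi (carrier E)"
    by (rule eq_card_imp_inj_on[OF finE]) (simp add: img cardE cd T_def)
  have grpE: "group E" by (simp add: E_def group_E)
  have closed: "x \<otimes> y \<in> T" if xy: "x \<in> T" "y \<in> T" for x y
  proof -
    obtain f where "f \<in> carrier E" "x = ?phi f" using xy(1) img by blast
    moreover obtain g where "g \<in> carrier E" "y = ?phi g" using xy(2) img by blast
    ultimately have "x \<otimes> y = ?phi (f \<otimes>\<^bsub>E\<^esub> g)" "f \<otimes>\<^bsub>E\<^esub> g \<in> carrier E"
      using hom monoid.m_closed[OF group.is_monoid[OF grpE]] by auto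
    then show ?thesis using img by blast
  qed
  have phi_one: "?phi (\<one>\<^bsub>E\<^esub>) = \<one>"
    by (simp add: E_def elem_ab2_def phi4_def pw_def)
  have sqT: "x \<otimes> x = \<one>" if xT: "x \<in> T" for x
  proof -
    obtain f where f: "f \<in> carrier E" "x = ?phi f" using xT img by blast
    have "f \<otimes>\<^bsub>E\<^esub> f = \<one>\<^bsub>E\<^esub>"
    proof -
      have "f \<otimes>\<^bsub>E\<^esub> f = (\<lambda>i\<in>{..<4}. (f i + f i) mod 2)" by (simp add: multE)
      also have "\<dots> = (\<lambda>i\<in>{..<4}. 0)"
      proof (rule restrict_ext)
        fix i assume "i \<in> {..<4::nat}"
        then have "f i \<in> {0,1}" using f(1) unfolding carE PiE_iff range2' by auto
        then show "(f i + f i) mod 2 = 0" by auto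
      qed
      also have "\<dots> = \<one>\<^bsub>E\<^esub>" by (simp add: E_def elem_ab2_def)
      finally show ?thesis .
    qed
    then show ?thesis using hom[OF f(1) f(1)] f(2) phi_one by simp
  qed
  have sgT: "subgroup T G"
  proof (rule subgroupI)
    show "T \<subseteq> carrier G" by (rule Tcar)
    show "T \<noteq> {}" using img cardE by auto
    fix x assume x: "x \<in> T"
    then have "inv x = x" using sqT[OF x] Tcar by (intro inv_equality) auto
    then show "inv x \<in> T" using x by simp
  next
    fix x y assume "x \<in> T" "y \<in> T" then show "x \<otimes> y \<in> T" by (rule closed)
  qed
  have "?phi \<in> hom E (G\<lparr>carrier := T\<rparr>)"
    unfolding hom_def using img hom by auto
  moreover have "bij_betw ?phi (carrier E) T"
    using inj img by (simp add: bij_betw_def)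
  ultimately have "?phi \<in> iso E (G\<lparr>carrier := T\<rparr>)" by (auto simp: iso_def)
  then have "E \<cong> G\<lparr>carrier := T\<rparr>" by (rule is_isoI)
  then have "G\<lparr>carrier := T\<rparr> \<cong> E" by (rule group.iso_sym[OF grpE])
  then show ?thesis using sgT by (simp add: T_def E_def)
qed

type_synonym el = "(int \<times> int \<times> int) \<times> int \<times> int"

lemma rho_00[simp]: "rho 0 0 (a,b,c) = (a, b, c)" by (simp add: rho_def)
lemma rho_01[simp]: "rho 0 1 (a,b,c) = (- c, - b, - a)" by (simp add: rho_def actT_def)
lemma rho_10[simp]: "rho 1 0 (a,b,c) = (c, a - c, b + c)" by (simp add: rho_def actS_def)
lemma rho_11[simp]: "rho 1 1 (a,b,c) = (- a, a - c, - a - b)" by (simp add: rho_def actS_def actT_def)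
lemma rho_20[simp]: "rho 2 0 (a,b,c) = (b + c, - b, a + b)" by (simp add: rho_def actS_def numeral_eq_Suc)
lemma rho_21[simp]: "rho 2 1 (a,b,c) = (- a - b, b, - b - c)" by (simp add: rho_def actS_def actT_def numeral_eq_Suc)
lemma rho_30[simp]: "rho 3 0 (a,b,c) = (a + b, - a + c, a)" by (simp add: rho_def actS_def numeral_eq_Suc)
lemma rho_31[simp]: "rho 3 1 (a,b,c) = (- b - c, - a + c, - c)" by (simp add: rho_def actS_def actT_def numeral_eq_Suc)

lemmas ev = S_mult_eq vadd4_def dm_def

definition Fset :: "el set" where
  "Fset = set [((0,0,0),0,0), ((0,2,2),0,0), ((2,0,2),0,0), ((2,2,0),0,0)]"
definition f1 :: el where "f1 = ((0,2,2),0,0)"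
definition f2 :: el where "f2 = ((2,0,2),0,0)"
definition GL :: "(el \<times> el) list" where
  "GL = [(((0,0,0),2,0), ((0,0,0),1,1)), (((0,1,3),2,0), ((0,0,0),1,1)), (((0,0,0),2,0), ((1,0,1),1,1)), (((1,1,2),2,0), ((1,1,2),1,1)), (((1,1,2),2,0), ((0,1,1),1,1)), (((1,0,3),2,0), ((0,1,1),1,1)), (((0,1,3),2,0), ((1,0,1),1,1)), (((1,0,3),2,0), ((1,1,2),1,1))]"

definition R1 :: "el list" where "R1 = [((0,0,0),2,0), ((0,1,3),2,0), ((1,0,3),2,0), ((1,1,2),2,0)]"
definition R2 :: "el list" where "R2 = [((0,0,0),1,1), ((0,1,1),1,1), ((1,0,1),1,1), ((1,1,2),1,1)]"
definition OmL :: "el list" where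
  "OmL = [((0,0,0),0,0), ((0,0,2),0,0), ((0,2,0),0,0), ((0,2,2),0,0), ((2,0,0),0,0), ((2,0,2),0,0), ((2,2,0),0,0), ((2,2,2),0,0)]"
definition TLL :: "el list list" where
  "TLL = [[((0,0,0),0,0), ((0,0,0),1,1), ((0,0,0),2,0), ((0,0,0),3,1), ((2,0,2),0,0), ((2,0,2),1,1), ((2,0,2),2,0), ((2,0,2),3,1), ((0,2,2),0,0), ((0,2,2),1,1), ((0,2,2),2,0), ((0,2,2),3,1), ((2,2,0),0,0), ((2,2,0),1,1), ((2,2,0),2,0), ((2,2,0),3,1)], [((0,0,0),0,0), ((0,0,0),1,1), ((0,1,3),2,0), ((0,1,3),3,1), ((2,0,2),0,0), ((2,0,2),1,1), ((2,1,1),2,0), ((2,1,1),3,1), ((0,2,2),0,0), ((0,2,2),1,1), ((0,3,1),2,0), ((0,3,1),3,1), ((2,2,0),0,0), ((2,2,0),1,1), ((2,3,3),2,0), ((2,3,3),3,1)], [((0,0,0),0,0), ((1,0,1),1,1), ((0,0,0),2,0), ((1,0,1),3,1), ((2,0,2),0,0), ((3,0,3),1,1), ((2,0,2),2,0), ((3,0,3),3,1), ((0,2,2),0,0), ((1,2,3),1,1), ((0,2,2),2,0), ((1,2,3),3,1), ((2,2,0),0,0), ((3,2,1),1,1), ((2,2,0),2,0), ((3,2,1),3,1)], [((0,0,0),0,0), ((1,1,2),1,1), ((1,1,2),2,0), ((0,0,0),3,1), ((2,0,2),0,0), ((3,1,0),1,1), ((3,1,0),2,0), ((2,0,2),3,1),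 ((0,2,2),0,0), ((1,3,0),1,1), ((1,3,0),2,0), ((0,2,2),3,1), ((2,2,0),0,0), ((3,3,2),1,1), ((3,3,2),2,0), ((2,2,0),3,1)], [((0,0,0),0,0), ((0,1,1),1,1), ((1,1,2),2,0), ((3,0,3),3,1), ((2,0,2),0,0), ((2,1,3),1,1), ((3,1,0),2,0), ((1,0,1),3,1), ((0,2,2),0,0), ((0,3,3),1,1), ((1,3,0),2,0), ((3,2,1),3,1), ((2,2,0),0,0), ((2,3,1),1,1), ((3,3,2),2,0), ((1,2,3),3,1)], [((0,0,0),0,0), ((0,1,1),1,1), ((1,0,3),2,0), ((3,3,0),3,1), ((2,0,2),0,0), ((2,1,3),1,1), ((3,0,1),2,0), ((1,3,2),3,1), ((0,2,2),0,0), ((0,3,3),1,1), ((1,2,1),2,0), ((3,1,2),3,1), ((2,2,0),0,0), ((2,3,1),1,1), ((3,2,3),2,0), ((1,1,0),3,1)], [((0,0,0),0,0), ((1,0,1),1,1), ((0,1,3),2,0), ((1,1,0),3,1), ((2,0,2),0,0), ((3,0,3),1,1), ((2,1,1),2,0), ((3,1,2),3,1), ((0,2,2),0,0), ((1,2,3),1,1), ((0,3,1),2,0), ((1,3,2),3,1), ((2,2,0),0,0), ((3,2,1),1,1), ((2,3,3),2,0), ((3,3,0),3,1)], [((0,0,0),0,0), ((1,1,2),1,1), ((1,0,3),2,0), ((0,3,1),3,1), ((2,0,2),0,0), ((3,1,0),1,1), ((3,0,1),2,0), ((2,3,3),3,1), ((0,2,2),0,0), ((1,3,0),1,1), ((1,2,1),2,0),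 ((0,1,3),3,1), ((2,2,0),0,0), ((3,3,2),1,1), ((3,2,3),2,0), ((2,1,1),3,1)]]"
definition CT :: "(nat \<times> el \<times> el \<times> nat) list" where
  "CT = [(0, ((1,0,0),0,0), ((3,0,0),0,0), 5), (0, ((0,1,0),0,0), ((0,3,0),0,0), 5), (0, ((0,0,1),0,0), ((0,0,3),0,0), 5), (0, ((0,0,0),1,0), ((0,0,0),3,0), 0), (0, ((0,0,0),0,1), ((0,0,0),0,1), 0), (1, ((1,0,0),0,0), ((3,0,0),0,0), 4), (1, ((0,1,0),0,0), ((0,3,0),0,0), 4), (1, ((0,0,1),0,0), ((0,0,3),0,0), 4), (1, ((0,0,0),1,0), ((0,0,0),3,0), 3), (1, ((0,0,0),0,1), ((0,0,0),0,1), 3), (2, ((1,0,0),0,0), ((3,0,0),0,0), 7), (2, ((0,1,0),0,0), ((0,3,0),0,0), 7), (2, ((0,0,1),0,0), ((0,0,3),0,0), 7), (2, ((0,0,0),1,0), ((0,0,0),3,0), 2), (2, ((0,0,0),0,1), ((0,0,0),0,1), 2), (3, ((1,0,0),0,0), ((3,0,0),0,0), 6), (3, ((0,1,0),0,0), ((0,3,0),0,0), 6), (3, ((0,0,1),0,0), ((0,0,3),0,0), 6), (3, ((0,0,0),1,0), ((0,0,0),3,0), 1), (3, ((0,0,0),0,1), ((0,0,0),0,1), 1), (4, ((1,0,0),0,0), ((3,0,0),0,0), 1), (4, ((0,1,0),0,0), ((0,3,0),0,0), 1), (4, ((0,0,1),0,0), ((0,0,3),0,0), 1), (4, ((0,0,0),1,0),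 ((0,0,0),3,0), 6), (4, ((0,0,0),0,1), ((0,0,0),0,1), 6), (5, ((1,0,0),0,0), ((3,0,0),0,0), 0), (5, ((0,1,0),0,0), ((0,3,0),0,0), 0), (5, ((0,0,1),0,0), ((0,0,3),0,0), 0), (5, ((0,0,0),1,0), ((0,0,0),3,0), 5), (5, ((0,0,0),0,1), ((0,0,0),0,1), 5), (6, ((1,0,0),0,0), ((3,0,0),0,0), 3), (6, ((0,1,0),0,0), ((0,3,0),0,0), 3), (6, ((0,0,1),0,0), ((0,0,3),0,0), 3), (6, ((0,0,0),1,0), ((0,0,0),3,0), 4), (6, ((0,0,0),0,1), ((0,0,0),0,1), 4), (7, ((1,0,0),0,0), ((3,0,0),0,0), 2), (7, ((0,1,0),0,0), ((0,3,0),0,0), 2), (7, ((0,0,1),0,0), ((0,0,3),0,0), 2), (7, ((0,0,0),1,0), ((0,0,0),3,0), 7), (7, ((0,0,0),0,1), ((0,0,0),0,1), 7)]"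
definition inr :: "el \<Rightarrow> bool" where
  "inr x = (red (fst x) = fst x \<and> snd x \<in> set [(0,0),(1,0),(2,0),(3,0),(0,1),(1,1),(2,1),(3,1)])"

lemma inr_carrier: "inr x \<Longrightarrow> x \<in> carrier S_grp"
  by (cases x) (auto simp: inr_def carrier_S VR_iff DR_def simp del: mem_Times_iff)

lemma two_cases: "(a::int) \<in> {0..<4} \<Longrightarrow> (a + a) mod 4 = 0 \<Longrightarrow> a = 0 \<or> a = 2"
  by simp presburger

lemma Om_mem:
  assumes "x \<in> carrier S_grp" "snd x = (0,0)" "S_mult x x = ((0,0,0),0,0)"
  shows "x \<in> set OmL"
proof -
  obtain a b c where x: "x = ((a,b,c),0,0)" and r: "a \<in> {0..<4}" "b \<in> {0..<4}" "c \<in> {0..<4}"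
    using assms(1,2) by (cases x) (auto simp: carrier_S)
  have "(a + a) mod 4 = 0" "(b + b) mod 4 = 0" "(c + c) mod 4 = 0"
    using assms(3) by (simp_all add: x ev)
  then have "a = 0 \<or> a = 2" "b = 0 \<or> b = 2" "c = 0 \<or> c = 2"
    using two_cases[OF r(1)] two_cases[OF r(2)] two_cases[OF r(3)] by auto
  then show ?thesis unfolding x by (elim disjE) (simp_all add: OmL_def)
qed

lemma third: "(a::int) \<in> {0..<4} \<Longrightarrow> b \<in> {0..<4} \<Longrightarrow> c \<in> {0..<4} \<Longrightarrow> (a + b + c) mod 4 = 0 \<Longrightarrow> c = (- a - b) mod 4"
  by simp presburger

lemma third2: "(a::int) \<in> {0..<4} \<Longrightarrow> b \<in> {0..<4} \<Longrightarrow> c \<in> {0..<4} \<Longrightarrow> (a + b - c) mod 4 = 0 \<Longrightarrow> c = (a + b) mod 4"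
  by simp presburger

lemma range4L: "(a::int) \<in> {0..<4} \<Longrightarrow> a \<in> set [0,1,2,3]"
  by auto

lemma C1_comp: "\<forall>a\<in>set [0,1,2,3]. \<forall>b\<in>set [0,1,2,3]. \<exists>f\<in>Fset. S_mult ((a,b,(-a-b) mod 4),2,0) f \<in> set R1"
  by code_simp

lemma C2_comp: "\<forall>a\<in>set [0,1,2,3]. \<forall>b\<in>set [0,1,2,3]. \<exists>f\<in>Fset. S_mult ((a,b,(a+b) mod 4),1,1) f \<in> set R2"
  by code_simp

lemma C1_mem:
  assumes "x \<in> carrier S_grp" "snd x = (2,0)" "S_mult x x = ((0,0,0),0,0)"
  shows "\<exists>f\<in>Fset. S_mult x f \<in> set R1"
proof -
  obtain a b c where x: "x = ((a,b,c),2,0)" and r: "a \<in> {0..<4}" "b \<in> {0..<4}" "c \<in> {0..<4}"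
    using assms(1,2) by (cases x) (auto simp: carrier_S)
  have "(a + b + c) mod 4 = 0"
    using assms(3) unfolding x by (simp add: ev; presburger)
  then have c: "c = (- a - b) mod 4" using third[OF r] by simp
  show ?thesis using C1_comp range4L[OF r(1)] range4L[OF r(2)] unfolding x c by blast
qed

lemma C2_mem:
  assumes "x \<in> carrier S_grp" "snd x = (1,1)" "S_mult x x = ((0,0,0),0,0)"
  shows "\<exists>f\<in>Fset. S_mult x f \<in> set R2"
proof -
  obtain a b c where x: "x = ((a,b,c),1,1)" and r: "a \<in> {0..<4}" "b \<in> {0..<4}" "c \<in> {0..<4}"
    using assms(1,2) by (cases x) (auto simp: carrier_S)
  have "(a + b - c) mod 4 = 0"
    using assms(3) unfolding x by (simp add: ev; presburger)
  then have c: "c = (a + b) mod 4" using third2[OF r] by simp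
  show ?thesis using C2_comp range4L[OF r(1)] range4L[OF r(2)] unfolding x c by blast
qed

lemma pairs_ok: "\<forall>r1\<in>set R1. \<forall>r2\<in>set R2. S_mult r1 r2 = S_mult r2 r1 \<longrightarrow> (r1, r2) \<in> set GL"
  by code_simp

definition Pd :: "int \<times> int \<Rightarrow> el \<Rightarrow> bool" where
  "Pd d x = (red (rho (fst d) (snd d) (fst x)) = fst x)"
definition Fd :: "int \<times> int \<Rightarrow> el set" where
  "Fd d = set (filter (Pd d) OmL)"

lemma Fd_comp:
  "filter (Pd (2,0)) OmL = [((0,0,0),0,0), ((0,2,2),0,0), ((2,0,2),0,0), ((2,2,0),0,0)]"
  "filter (Pd (1,1)) OmL = [((0,0,0),0,0), ((0,2,2),0,0), ((2,0,2),0,0), ((2,2,0),0,0)]"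
  "filter (Pd (3,1)) OmL = [((0,0,0),0,0), ((0,2,2),0,0), ((2,0,2),0,0), ((2,2,0),0,0)]"
  "filter (Pd (0,1)) OmL = [((0,0,0),0,0), ((0,2,0),0,0), ((2,0,2),0,0), ((2,2,2),0,0)]"
  "filter (Pd (2,1)) OmL = [((0,0,0),0,0), ((0,0,2),0,0), ((2,0,0),0,0), ((2,0,2),0,0)]"
  by code_simp+

lemma Fd_20: "Fd (2,0) = Fset" by (simp only: Fd_def Fd_comp Fset_def)
lemma Fd_11: "Fd (1,1) = Fset" by (simp only: Fd_def Fd_comp Fset_def)
lemma Fd_31: "Fd (3,1) = Fset" by (simp only: Fd_def Fd_comp Fset_def)
lemma Fd_01: "Fd (0,1) = set [((0,0,0),0,0), ((0,2,0),0,0), ((2,0,2),0,0), ((2,2,2),0,0)]"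
  by (simp only: Fd_def Fd_comp)
lemma Fd_21: "Fd (2,1) = set [((0,0,0),0,0), ((0,0,2),0,0), ((2,0,0),0,0), ((2,0,2),0,0)]"
  by (simp only: Fd_def Fd_comp)

lemma card_Fset: "card Fset = 4" by code_simp
lemma card_OmL: "card (set OmL) = 8" by code_simp
lemma card_F01: "card (Fd (0,1) \<inter> Fset) \<le> 2" unfolding Fd_01 Fset_def by code_simp
lemma card_F21: "card (Fd (2,1) \<inter> Fset) \<le> 2" unfolding Fd_21 Fset_def by code_simp
lemma card_F01': "card (Fd (0,1)) = 4" unfolding Fd_01 by code_simp
lemma card_F21': "card (Fd (2,1)) = 4" unfolding Fd_21 by code_simp

lemma rho_0_0: "rho 0 0 w = w" by (simp add: rho_def)

lemma mod_cancel4: "((u::int) + y) mod 4 = (v + u) mod 4 \<Longrightarrow> y mod 4 = v mod 4"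
  by presburger

lemma vadd4_cancel: assumes "vadd4 u y = vadd4 v u" shows "red y = red v"
proof -
  obtain u1 u2 u3 y1 y2 y3 v1 v2 v3 where e: "u = (u1,u2,u3)" "y = (y1,y2,y3)" "v = (v1,v2,v3)"
    by (cases u; cases y; cases v)
  have "(u1 + y1) mod 4 = (v1 + u1) mod 4" "(u2 + y2) mod 4 = (v2 + u2) mod 4" "(u3 + y3) mod 4 = (v3 + u3) mod 4"
    using assms by (simp_all add: e vadd4_def)
  note h = this
  have "y1 mod 4 = v1 mod 4" "y2 mod 4 = v2 mod 4" "y3 mod 4 = v3 mod 4"
    by (rule mod_cancel4[OF h(1)], rule mod_cancel4[OF h(2)], rule mod_cancel4[OF h(3)])
  then show ?thesis unfolding e red_def by (simp only: prod.case)
qed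

lemma Kd:
  assumes "k \<in> set OmL" "h \<in> carrier S_grp" "S_mult h k = S_mult k h"
  shows "k \<in> Fd (snd h)"
proof -
  obtain v where k: "k = (v,0,0)" and rv: "red v = v" using assms(1) by (auto simp: OmL_def red_def)
  obtain u d where h: "h = (u,d)" by (cases h)
  have "vadd4 u (rho (fst d) (snd d) v) = vadd4 v u"
    using assms(3) by (simp add: k h S_mult_eq rho_0_0)
  then have "red (rho (fst d) (snd d) v) = v" using vadd4_cancel rv by metis
  then show ?thesis using assms(1) by (simp add: Fd_def Pd_def k h)
qed

definition T :: "nat \<Rightarrow> el set" where
  "T m = span4 S_grp f1 f2 (fst (GL ! m)) (snd (GL ! m))"

lemma T_comp: "\<forall>m\<in>set [0..<8]. T m = set (TLL ! m)"
  unfolding T_def span4_def pw_def mult_S one_S by code_simp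

lemma TL_distinct: "\<forall>i\<in>set [0..<8]. \<forall>j\<in>set [0..<8]. i \<noteq> j \<longrightarrow> set (TLL ! i) \<noteq> set (TLL ! j)"
  by code_simp

lemma TL_card: "\<forall>i\<in>set [0..<8]. card (set (TLL ! i)) = 16"
  by code_simp

lemma GL_ok: "\<forall>x\<in>set GL. inr f1 \<and> inr f2 \<and> inr (fst x) \<and> inr (snd x) \<and>
   S_mult f1 f1 = ((0,0,0),0,0) \<and> S_mult f2 f2 = ((0,0,0),0,0) \<and>
   S_mult (fst x) (fst x) = ((0,0,0),0,0) \<and> S_mult (snd x) (snd x) = ((0,0,0),0,0) \<and>
   S_mult f1 f2 = S_mult f2 f1 \<and> S_mult f1 (fst x) = S_mult (fst x) f1 \<and>
   S_mult f1 (snd x) = S_mult (snd x) f1 \<and> S_mult f2 (fst x) = S_mult (fst x) f2 \<and>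
   S_mult f2 (snd x) = S_mult (snd x) f2 \<and> S_mult (fst x) (snd x) = S_mult (snd x) (fst x)"
  by code_simp

lemma CT_ok: "\<forall>(i,g,gi,j)\<in>set CT. inr g \<and> inr gi \<and> S_mult gi g = ((0,0,0),0,0) \<and> i < 8 \<and> j < 8 \<and>
   (\<forall>x\<in>set (TLL ! i). S_mult g (S_mult x gi) \<in> set (TLL ! j))"
  by code_simp

lemma len_GL: "length GL = 8" by (simp add: GL_def)

lemma span4_sub:
  assumes "subgroup H G" "a \<in> H" "b \<in> H" "c \<in> H" "d \<in> H"
  shows "span4 G a b c d \<subseteq> H"
proof
  fix x assume "x \<in> span4 G a b c d"
  then obtain i j k l where x: "x = pw G a i \<otimes>\<^bsub>G\<^esub> (pw G b j \<otimes>\<^bsub>G\<^esub> (pw G c k \<otimes>\<^bsub>G\<^esub> pw G d l))"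
    by (auto simp: span4_iff)
  have pw: "pw G g n \<in> H" if "g \<in> H" for g n
    using that subgroup.one_closed[OF assms(1)] by (simp add: pw_def)
  show "x \<in> H" unfolding x
    by (intro subgroup.m_closed[OF assms(1)] pw assms(2-5))
qed

lemma sq_E: "f \<in> carrier (elem_ab2 n) \<Longrightarrow> f \<otimes>\<^bsub>elem_ab2 n\<^esub> f = (\<lambda>i\<in>{..<n}. 0)"
proof -
  assume f: "f \<in> carrier (elem_ab2 n)"
  have "(f i + f i) mod 2 = 0" if "i \<in> {..<n}" for i
  proof -
    have "f i \<in> {0..<2}" using f that by (auto simp: elem_ab2_def carrier_integer_mod_group PiE_iff)
    then have "f i = 0 \<or> f i = 1" by auto
    then show ?thesis by auto
  qed
  then show ?thesis by (auto simp: elem_ab2_def intro!: restrict_ext)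
qed

lemma iso_facts:
  assumes "H \<in> subgroups_iso S_grp (elem_ab2 n)"
  shows "subgroup H S_grp" "card H = 2 ^ n" "\<forall>x\<in>H. S_mult x x = ((0,0,0),0,0)"
proof -
  have sg: "subgroup H S_grp" and iso: "S_grp\<lparr>carrier := H\<rparr> \<cong> elem_ab2 n"
    using assms by (auto simp: subgroups_iso_def)
  then obtain \<phi> where \<phi>: "\<phi> \<in> iso (S_grp\<lparr>carrier := H\<rparr>) (elem_ab2 n)" by (auto simp: is_iso_def)
  have bij: "bij_betw \<phi> H (carrier (elem_ab2 n))" using \<phi> by (simp add: iso_def)
  have hom: "\<phi> (S_mult x y) = \<phi> x \<otimes>\<^bsub>elem_ab2 n\<^esub> \<phi> y" if "x \<in> H" "y \<in> H" for x y
    using \<phi> that by (auto simp: iso_def hom_def mult_S)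
  have carE: "carrier (elem_ab2 n) = (\<Pi>\<^sub>E i\<in>{..<n}. {0..<2})"
    by (simp add: elem_ab2_def carrier_integer_mod_group)
  show "subgroup H S_grp" by (rule sg)
  have "card H = card (carrier (elem_ab2 n))" using bij by (rule bij_betw_same_card)
  also have "\<dots> = 2 ^ n" by (simp add: carE card_PiE)
  finally show "card H = 2 ^ n" .
  have eH: "((0,0,0),0,0) \<in> H" using subgroup.one_closed[OF sg] by (simp add: one_S)
  have e1: "S_mult ((0,0,0),0,0) ((0,0,0),0,0) = ((0,0,0),0,0)" by code_simp
  have mH: "S_mult x y \<in> H" if "x \<in> H" "y \<in> H" for x y
    using subgroup.m_closed[OF sg that] by (simp add: mult_S)
  have inj: "inj_on \<phi> H" using bij by (simp add: bij_betw_def)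
  have phiE: "\<phi> x \<in> carrier (elem_ab2 n)" if "x \<in> H" for x using bij that by (auto simp: bij_betw_def)
  show "\<forall>x\<in>H. S_mult x x = ((0,0,0),0,0)"
  proof
    fix x assume x: "x \<in> H"
    have "\<phi> (S_mult x x) = (\<lambda>i\<in>{..<n}. 0)" using hom[OF x x] sq_E[OF phiE[OF x]] by simp
    moreover have "\<phi> ((0,0,0),0,0) = (\<lambda>i\<in>{..<n}. 0)"
      using hom[OF eH eH] sq_E[OF phiE[OF eH]] e1 by simp
    ultimately show "S_mult x x = ((0,0,0),0,0)"
      using inj_onD[OF inj] mH[OF x x] eH by metis
  qed
qed

definition DRL :: "(int \<times> int) list" where
  "DRL = [(0,0),(1,0),(2,0),(3,0),(0,1),(1,1),(2,1),(3,1)]"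

lemma DR_L: assumes "d \<in> DR" shows "d \<in> set DRL"
proof -
  obtain i j where d: "d = (i,j)" by (cases d)
  have "i = 0 \<or> i = 1 \<or> i = 2 \<or> i = 3" "j = 0 \<or> j = 1"
    using assms unfolding d DR_def mem_Times_iff fst_conv snd_conv range4 range2 by auto
  then show ?thesis unfolding d by (elim disjE) (simp_all add: DRL_def)
qed

lemma Pinv_comp: "\<forall>d\<in>set DRL. dm d d = (0,0) \<longrightarrow> d \<in> set [(0,0),(2,0),(0,1),(1,1),(2,1),(3,1)]"
  by code_simp

lemma ncomm: "dm (0,1) (1,1) \<noteq> dm (1,1) (0,1)" "dm (0,1) (3,1) \<noteq> dm (3,1) (0,1)"
  "dm (2,1) (1,1) \<noteq> dm (1,1) (2,1)" "dm (2,1) (3,1) \<noteq> dm (3,1) (2,1)"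
  by code_simp+

lemma card4: "card {(0::int,0::int),(2,0),(0,1),(2,1)} = 4" "card {(0::int,0::int),(2,0),(1,1),(3,1)} = 4"
  by simp_all

lemma classify:
  assumes sg: "subgroup H S_grp" and sq: "\<forall>x\<in>H. S_mult x x = ((0,0,0),0,0)" and c16: "16 \<le> card H"
  shows "card H = 16 \<and> (\<exists>m<8. H = T m)"
proof -
  interpret S: group S_grp by (rule group_S)
  have Hcar: "H \<subseteq> carrier S_grp" using sg by (rule subgroup.subset)
  have fincar: "finite (carrier S_grp)" by (simp add: carrier_S DR_def)
  have finH: "finite H" using Hcar fincar finite_subset by blast
  have eH: "((0,0,0),0,0) \<in> H" using subgroup.one_closed[OF sg] by (simp add: one_S)
  have mH: "S_mult x y \<in> H" if "x \<in> H" "y \<in> H" for x y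
    using subgroup.m_closed[OF sg that] by (simp add: mult_S)
  have invx: "inv\<^bsub>S_grp\<^esub> x = x" if "x \<in> H" for x
    using that sq Hcar by (intro S.inv_equality) (auto simp: mult_S one_S)
  have comm: "S_mult x y = S_mult y x" if xy: "x \<in> H" "y \<in> H" for x y
  proof -
    have xyH: "S_mult x y \<in> H" using mH xy .
    have "S_mult x y = inv\<^bsub>S_grp\<^esub> (S_mult x y)" using invx[OF xyH] by simp
    also have "\<dots> = inv\<^bsub>S_grp\<^esub> (x \<otimes>\<^bsub>S_grp\<^esub> y)" by (simp add: mult_S)
    also have "\<dots> = inv\<^bsub>S_grp\<^esub> y \<otimes>\<^bsub>S_grp\<^esub> inv\<^bsub>S_grp\<^esub> x"
      using xy Hcar by (intro S.inv_mult_group) auto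
    also have "\<dots> = S_mult y x" using invx xy by (simp add: mult_S)
    finally show ?thesis .
  qed
  have sndmult: "snd (S_mult x y) = dm (snd x) (snd y)" for x y
    by (cases x; cases y) (simp add: S_mult_eq)
  have dd: "dm (snd h) (snd h) = (0,0)" if "h \<in> H" for h
    using sndmult[of h h] sq that by simp
  define K where "K = {h \<in> H. snd h = (0,0)}"
  define P where "P = snd ` H"
  have finK: "finite K" using finH by (simp add: K_def)
  have finP: "finite P" using finH by (simp add: P_def)
  have KH: "K \<subseteq> H" by (auto simp: K_def)
  have Pcomm: "dm d1 d2 = dm d2 d1" if dP: "d1 \<in> P" "d2 \<in> P" for d1 d2
  proof -
    obtain h1 h2 where "h1 \<in> H" "h2 \<in> H" "d1 = snd h1" "d2 = snd h2" using dP by (auto simp: P_def)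
    then show ?thesis using comm sndmult by metis
  qed
  have PI: "P \<subseteq> set [(0,0),(2,0),(0,1),(1,1),(2,1),(3,1)]"
  proof
    fix d assume "d \<in> P"
    then obtain h where h: "h \<in> H" "d = snd h" by (auto simp: P_def)
    have "d \<in> DR" using h Hcar by (cases h) (auto simp: carrier_S)
    moreover have "dm d d = (0,0)" using dd h by simp
    ultimately show "d \<in> set [(0,0),(2,0),(0,1),(1,1),(2,1),(3,1)]" using Pinv_comp DR_L by blast
  qed
  have fib: "card {h \<in> H. snd h = d} \<le> card K" if dP: "d \<in> P" for d
  proof -
    obtain h0 where h0: "h0 \<in> H" "snd h0 = d" using dP by (auto simp: P_def)
    have "inj_on (S_mult h0) {h \<in> H. snd h = d}"
    proof (rule inj_onI)
      fix x y assume "x \<in> {h \<in> H. snd h = d}" "y \<in> {h \<in> H. snd h = d}" "S_mult h0 x = S_mult h0 y"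
      then show "x = y" using h0 Hcar S.Units_l_cancel[of h0 x y] S.Units_eq by (auto simp: mult_S)
    qed
    moreover have "S_mult h0 ` {h \<in> H. snd h = d} \<subseteq> K"
    proof
      fix z assume "z \<in> S_mult h0 ` {h \<in> H. snd h = d}"
      then obtain h where h: "h \<in> H" "snd h = d" "z = S_mult h0 h" by auto
      have "snd z = (0,0)" using h h0 sndmult dd[OF h0(1)] by simp
      then show "z \<in> K" using h h0 mH by (simp add: K_def)
    qed
    ultimately show ?thesis using finK by (rule card_inj_on_le)
  qed
  have cardH: "card H \<le> card P * card K"
  proof -
    have "H = (\<Union>d\<in>P. {h \<in> H. snd h = d})" by (auto simp: P_def)
    then have "card H \<le> (\<Sum>d\<in>P. card {h \<in> H. snd h = d})"
      using card_UN_le[OF finP, of "\<lambda>d. {h \<in> H. snd h = d}"] by simp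
    also have "\<dots> \<le> (\<Sum>d\<in>P. card K)" using fib by (rule sum_mono)
    also have "\<dots> = card P * card K" by simp
    finally show ?thesis .
  qed
  have KOm: "K \<subseteq> set OmL"
    using Hcar sq Om_mem by (auto simp: K_def)
  have cK8: "card K \<le> 8" using card_mono[OF _ KOm] card_OmL by simp
  have KF: "K \<subseteq> Fd d" if dP: "d \<in> P" for d
  proof
    fix k assume k: "k \<in> K"
    obtain h where h: "h \<in> H" "snd h = d" using dP by (auto simp: P_def)
    have "k \<in> H" using k by (simp add: K_def)
    then have "S_mult h k = S_mult k h" using comm h by blast
    moreover have "k \<in> set OmL" using KOm k by auto
    moreover have "h \<in> carrier S_grp" using h Hcar by auto
    ultimately have "k \<in> Fd (snd h)" by (intro Kd)
    then show "k \<in> Fd d" using h by simp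
  qed
  have big: "4 \<le> card P" if "card K \<le> 4"
  proof (rule ccontr)
    assume "\<not> 4 \<le> card P"
    then have "card P \<le> 3" by simp
    then have "card P * card K \<le> 3 * 4" using that by (rule mult_le_mono)
    then show False using cardH c16 by simp
  qed
  have notP1: "(0,1) \<notin> P \<and> (2,1) \<notin> P"
  proof (rule ccontr)
    assume "\<not> ?thesis"
    then obtain r where r: "r \<in> P" "r = (0,1) \<or> r = (2,1)" by blast
    have n11: "(1,1) \<notin> P" "(3,1) \<notin> P" using Pcomm r ncomm by metis+
    then have PV1: "P \<subseteq> {(0,0),(2,0),(0,1),(2,1)}" using PI by auto
    have cP4: "card P \<le> 4" using card_mono[OF _ PV1] card4 by simp
    have KFr: "K \<subseteq> Fd r" using KF r(1) .
    have "card (Fd r) = 4" using r(2) card_F01' card_F21' by auto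
    then have cK4: "card K \<le> 4" using card_mono[OF _ KFr] by (simp add: Fd_def)
    have "card P = 4" using big[OF cK4] cP4 by simp
    then have "P = {(0,0),(2,0),(0,1),(2,1)}" using card_subset_eq[OF _ PV1] card4 by simp
    then have "(2,0) \<in> P" by simp
    then have "K \<subseteq> Fd (2,0)" by (rule KF)
    then have "K \<subseteq> Fd r \<inter> Fset" using KFr Fd_20 by auto
    moreover have "card (Fd r \<inter> Fset) \<le> 2" using r(2) card_F01 card_F21 by auto
    ultimately have "card K \<le> 2" using card_mono[of "Fd r \<inter> Fset" K] by (force simp: Fd_def)
    then have "card P * card K \<le> 4 * 2" using cP4 by (intro mult_le_mono)
    then show False using cardH c16 by simp
  qed
  have PV2: "P \<subseteq> {(0,0),(2,0),(1,1),(3,1)}" using PI notP1 by auto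
  have cP4: "card P \<le> 4" using card_mono[OF _ PV2] card4 by simp
  have "\<exists>d\<in>P. d \<noteq> (0,0)"
  proof (rule ccontr)
    assume "\<not> ?thesis"
    then have "P \<subseteq> {(0,0)}" by auto
    then have "card P \<le> 1" using card_mono[of "{(0,0)}" P] by simp
    then have "card P * card K \<le> 1 * 8" using cK8 by (rule mult_le_mono)
    then show False using cardH c16 by simp
  qed
  then obtain d0 where d0: "d0 \<in> P" "d0 \<noteq> (0,0)" by blast
  have "Fd d0 = Fset" using d0 PV2 Fd_20 Fd_11 Fd_31 by auto
  then have KF0: "K \<subseteq> Fset" using KF[OF d0(1)] by simp
  have cK4: "card K \<le> 4" using card_mono[OF _ KF0] card_Fset by (simp add: Fset_def)
  have "card P = 4" using big[OF cK4] cP4 by simp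
  then have PE: "P = {(0,0),(2,0),(1,1),(3,1)}" using card_subset_eq[OF _ PV2] card4 by simp
  have "16 \<le> 4 * card K" using cardH c16 \<open>card P = 4\<close> by simp
  then have "card K = 4" using cK4 by simp
  then have KE: "K = Fset" using card_subset_eq[OF _ KF0] card_Fset by (simp add: Fset_def)
  have c16': "card H = 16" using cardH \<open>card P = 4\<close> \<open>card K = 4\<close> c16 by simp
  have FH: "Fset \<subseteq> H" using KE KH by simp
  have i20: "(2,0) \<in> snd ` H" and i11: "(1,1) \<in> snd ` H" using PE by (simp_all add: P_def[symmetric])
  obtain h1 where h1': "(2,0) = snd h1" "h1 \<in> H" using i20 by (rule imageE)
  obtain h2 where h2': "(1,1) = snd h2" "h2 \<in> H" using i11 by (rule imageE)
  have h1: "h1 \<in> H" "snd h1 = (2,0)" using h1' by simp_all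
  have h2: "h2 \<in> H" "snd h2 = (1,1)" using h2' by simp_all
  obtain fa where fa: "fa \<in> Fset" "S_mult h1 fa \<in> set R1"
    using C1_mem[OF subsetD[OF Hcar h1(1)] h1(2)] h1(1) sq by blast
  obtain fb where fb: "fb \<in> Fset" "S_mult h2 fb \<in> set R2"
    using C2_mem[OF subsetD[OF Hcar h2(1)] h2(2)] h2(1) sq by blast
  define r1 where "r1 = S_mult h1 fa"
  define r2 where "r2 = S_mult h2 fb"
  have r1H: "r1 \<in> H" unfolding r1_def using h1(1) fa(1) FH by (intro mH) auto
  have r2H: "r2 \<in> H" unfolding r2_def using h2(1) fb(1) FH by (intro mH) auto
  have "(r1, r2) \<in> set GL" using pairs_ok fa fb comm[OF r1H r2H] by (simp add: r1_def r2_def)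
  then obtain m where m: "m < 8" "GL ! m = (r1, r2)" using len_GL by (metis in_set_conv_nth)
  have f12: "f1 \<in> H" "f2 \<in> H" using FH by (auto simp: Fset_def f1_def f2_def)
  have TH: "T m \<subseteq> H" unfolding T_def using m f12 r1H r2H by (simp add: span4_sub[OF sg])
  have "m \<in> set [0..<8]" using m by simp
  then have "card (T m) = 16" using T_comp TL_card by metis
  then have "T m = H" using card_subset_eq[OF finH TH] c16' by simp
  then show ?thesis using c16' m by blast
qed

lemma T_eq: "m < 8 \<Longrightarrow> T m = set (TLL ! m)"
  using T_comp by simp

lemma T_card: "m < 8 \<Longrightarrow> card (T m) = 16"
  using TL_card T_eq by simp

lemma T_inj: "inj_on T {..<8}"
proof (rule inj_onI)
  fix i j assume "i \<in> {..<8::nat}" "j \<in> {..<8::nat}" "T i = T j"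
  then show "i = j" using TL_distinct T_eq by (metis atLeastLessThan_iff lessThan_iff set_upt zero_le)
qed

lemma T_in: assumes "m < 8" shows "T m \<in> subgroups_iso S_grp (elem_ab2 4)"
proof -
  have x: "GL ! m \<in> set GL" using assms len_GL by simp
  have ok: "inr f1" "inr f2" "inr (fst (GL ! m))" "inr (snd (GL ! m))"
   "S_mult f1 f1 = ((0,0,0),0,0)" "S_mult f2 f2 = ((0,0,0),0,0)"
   "S_mult (fst (GL ! m)) (fst (GL ! m)) = ((0,0,0),0,0)" "S_mult (snd (GL ! m)) (snd (GL ! m)) = ((0,0,0),0,0)"
   "S_mult f1 f2 = S_mult f2 f1" "S_mult f1 (fst (GL ! m)) = S_mult (fst (GL ! m)) f1"
   "S_mult f1 (snd (GL ! m)) = S_mult (snd (GL ! m)) f1" "S_mult f2 (fst (GL ! m)) = S_mult (fst (GL ! m)) f2"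
   "S_mult f2 (snd (GL ! m)) = S_mult (snd (GL ! m)) f2" "S_mult (fst (GL ! m)) (snd (GL ! m)) = S_mult (snd (GL ! m)) (fst (GL ! m))"
    using GL_ok x by blast+
  have "subgroup (span4 S_grp f1 f2 (fst (GL ! m)) (snd (GL ! m))) S_grp \<and>
        S_grp\<lparr>carrier := span4 S_grp f1 f2 (fst (GL ! m)) (snd (GL ! m))\<rparr> \<cong> elem_ab2 4"
    apply (rule span4_subgroup_iso[OF group_S])
    using ok inr_carrier T_card[OF assms] by (simp_all add: mult_S one_S T_def)
  then show ?thesis by (simp add: subgroups_iso_def T_def)
qed

lemma SI4: "subgroups_iso S_grp (elem_ab2 4) = T ` {..<8}"
proof
  show "subgroups_iso S_grp (elem_ab2 4) \<subseteq> T ` {..<8}"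
  proof
    fix H assume H: "H \<in> subgroups_iso S_grp (elem_ab2 4)"
    have "card H = 16 \<and> (\<exists>m<8. H = T m)"
      using iso_facts[OF H] by (intro classify) auto
    then show "H \<in> T ` {..<8}" by auto
  qed
  show "T ` {..<8} \<subseteq> subgroups_iso S_grp (elem_ab2 4)" using T_in by auto
qed

lemma SI5: "subgroups_iso S_grp (elem_ab2 5) = {}"
proof (rule ccontr)
  assume "subgroups_iso S_grp (elem_ab2 5) \<noteq> {}"
  then obtain H where H: "H \<in> subgroups_iso S_grp (elem_ab2 5)" by blast
  have "card H = 32" using iso_facts(2)[OF H] by simp
  moreover have "card H = 16 \<and> (\<exists>m<8. H = T m)"
    using iso_facts[OF H] by (intro classify) auto
  ultimately show False by simp
qed

definition cj :: "el \<Rightarrow> el set \<Rightarrow> el set" where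
  "cj g A = l_coset S_grp g (r_coset S_grp A (inv\<^bsub>S_grp\<^esub> g))"

lemma cj_img: "cj g A = (\<lambda>x. g \<otimes>\<^bsub>S_grp\<^esub> (x \<otimes>\<^bsub>S_grp\<^esub> inv\<^bsub>S_grp\<^esub> g)) ` A"
  by (auto simp: cj_def l_coset_def r_coset_def)

lemma conj_class_cj: "conj_class S_grp A = {cj g A | g. g \<in> carrier S_grp}"
  by (simp add: conj_class_def cj_def)

lemma cj_mult:
  assumes "g \<in> carrier S_grp" "h \<in> carrier S_grp" "A \<subseteq> carrier S_grp"
  shows "cj (g \<otimes>\<^bsub>S_grp\<^esub> h) A = cj g (cj h A)"
proof -
  interpret S: group S_grp by (rule group_S)
  show ?thesis unfolding cj_img image_image
  proof (rule image_cong[OF refl])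
    fix x assume "x \<in> A"
    then have x: "x \<in> carrier S_grp" using assms(3) by auto
    show "g \<otimes>\<^bsub>S_grp\<^esub> h \<otimes>\<^bsub>S_grp\<^esub> (x \<otimes>\<^bsub>S_grp\<^esub> inv\<^bsub>S_grp\<^esub> (g \<otimes>\<^bsub>S_grp\<^esub> h)) =
      g \<otimes>\<^bsub>S_grp\<^esub> (h \<otimes>\<^bsub>S_grp\<^esub> (x \<otimes>\<^bsub>S_grp\<^esub> inv\<^bsub>S_grp\<^esub> h) \<otimes>\<^bsub>S_grp\<^esub> inv\<^bsub>S_grp\<^esub> g)"
      using assms x by (simp add: S.inv_mult_group S.m_assoc)
  qed
qed

lemma cj_one: "A \<subseteq> carrier S_grp \<Longrightarrow> cj \<one>\<^bsub>S_grp\<^esub> A = A"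
proof -
  interpret S: group S_grp by (rule group_S)
  assume A: "A \<subseteq> carrier S_grp"
  have "(\<lambda>x. \<one>\<^bsub>S_grp\<^esub> \<otimes>\<^bsub>S_grp\<^esub> (x \<otimes>\<^bsub>S_grp\<^esub> inv\<^bsub>S_grp\<^esub> \<one>\<^bsub>S_grp\<^esub>)) ` A = (\<lambda>x. x) ` A"
    using A by (intro image_cong) auto
  then show ?thesis by (simp add: cj_img)
qed

lemma cj_carrier: "g \<in> carrier S_grp \<Longrightarrow> A \<subseteq> carrier S_grp \<Longrightarrow> cj g A \<subseteq> carrier S_grp"
proof -
  interpret S: group S_grp by (rule group_S)
  show "g \<in> carrier S_grp \<Longrightarrow> A \<subseteq> carrier S_grp \<Longrightarrow> cj g A \<subseteq> carrier S_grp"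
    by (auto simp: cj_img)
qed

lemma cj_inj: assumes "g \<in> carrier S_grp" "A \<subseteq> carrier S_grp"
  shows "card (cj g A) = card A"
proof -
  interpret S: group S_grp by (rule group_S)
  have "inj_on (\<lambda>x. g \<otimes>\<^bsub>S_grp\<^esub> (x \<otimes>\<^bsub>S_grp\<^esub> inv\<^bsub>S_grp\<^esub> g)) A"
  proof (rule inj_onI)
    fix x y assume xy: "x \<in> A" "y \<in> A" and e: "g \<otimes>\<^bsub>S_grp\<^esub> (x \<otimes>\<^bsub>S_grp\<^esub> inv\<^bsub>S_grp\<^esub> g) = g \<otimes>\<^bsub>S_grp\<^esub> (y \<otimes>\<^bsub>S_grp\<^esub> inv\<^bsub>S_grp\<^esub> g)"
    have c: "x \<in> carrier S_grp" "y \<in> carrier S_grp" using xy assms by auto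
    then have "x \<otimes>\<^bsub>S_grp\<^esub> inv\<^bsub>S_grp\<^esub> g = y \<otimes>\<^bsub>S_grp\<^esub> inv\<^bsub>S_grp\<^esub> g"
      using e assms S.Units_l_cancel S.Units_eq by simp
    then show "x = y" using c assms by simp
  qed
  then show ?thesis by (simp add: cj_img card_image)
qed

definition GENS :: "el list" where
  "GENS = [((1,0,0),0,0), ((0,1,0),0,0), ((0,0,1),0,0), ((0,0,0),1,0), ((0,0,0),0,1)]"

lemma GENS_inr: "\<forall>g\<in>set GENS. inr g" by code_simp

lemma rho_zero: "rho i j (0,0,0) = (0,0,0)"
proof -
  have a: "(actS ^^ n) (0,0,0) = (0,0,0)" for n by (induction n) (simp_all add: actS_def)
  have b: "(actT ^^ n) (0,0,0) = (0,0,0)" for n by (induction n) (simp_all add: actT_def)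
  show ?thesis by (simp add: rho_def a b)
qed

lemma pow_v1: "((1,0,0),0,0) [^]\<^bsub>S_grp\<^esub> (n::nat) = ((int n mod 4, 0, 0), 0, 0)"
  by (induction n) (simp_all add: one_S mult_S S_mult_eq vadd4_def dm_def mod_simps ac_simps)
lemma pow_v2: "((0,1,0),0,0) [^]\<^bsub>S_grp\<^esub> (n::nat) = ((0, int n mod 4, 0), 0, 0)"
  by (induction n) (simp_all add: one_S mult_S S_mult_eq vadd4_def dm_def mod_simps ac_simps)
lemma pow_v3: "((0,0,1),0,0) [^]\<^bsub>S_grp\<^esub> (n::nat) = ((0, 0, int n mod 4), 0, 0)"
  by (induction n) (simp_all add: one_S mult_S S_mult_eq vadd4_def dm_def mod_simps ac_simps)
lemma pow_s: "((0,0,0),1,0) [^]\<^bsub>S_grp\<^esub> (n::nat) = ((0, 0, 0), int n mod 4, 0)"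
  by (induction n) (simp_all add: one_S mult_S S_mult_eq vadd4_def dm_def mod_simps rho_zero ac_simps)
lemma pow_t: "((0,0,0),0,1) [^]\<^bsub>S_grp\<^esub> (n::nat) = ((0, 0, 0), 0, int n mod 2)"
  by (induction n) (simp_all add: one_S mult_S S_mult_eq vadd4_def dm_def mod_simps rho_zero ac_simps)

lemma decomp:
  assumes "x \<in> carrier S_grp"
  shows "\<exists>a b c i j. x = ((1,0,0),0,0) [^]\<^bsub>S_grp\<^esub> (a::nat) \<otimes>\<^bsub>S_grp\<^esub>
     (((0,1,0),0,0) [^]\<^bsub>S_grp\<^esub> (b::nat) \<otimes>\<^bsub>S_grp\<^esub>
     (((0,0,1),0,0) [^]\<^bsub>S_grp\<^esub> (c::nat) \<otimes>\<^bsub>S_grp\<^esub>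
     (((0,0,0),1,0) [^]\<^bsub>S_grp\<^esub> (i::nat) \<otimes>\<^bsub>S_grp\<^esub> ((0,0,0),0,1) [^]\<^bsub>S_grp\<^esub> (j::nat))))"
proof -
  obtain a b c i j where x: "x = ((a,b,c),i,j)" by (cases x) auto
  have r: "0 \<le> a" "a < 4" "0 \<le> b" "b < 4" "0 \<le> c" "c < 4" "0 \<le> i" "i < 4" "0 \<le> j" "j < 2"
    using assms by (auto simp: x carrier_S DR_def)
  have "x = ((1,0,0),0,0) [^]\<^bsub>S_grp\<^esub> nat a \<otimes>\<^bsub>S_grp\<^esub>
     (((0,1,0),0,0) [^]\<^bsub>S_grp\<^esub> nat b \<otimes>\<^bsub>S_grp\<^esub>
     (((0,0,1),0,0) [^]\<^bsub>S_grp\<^esub> nat c \<otimes>\<^bsub>S_grp\<^esub>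
     (((0,0,0),1,0) [^]\<^bsub>S_grp\<^esub> nat i \<otimes>\<^bsub>S_grp\<^esub> ((0,0,0),0,1) [^]\<^bsub>S_grp\<^esub> nat j)))"
    using r by (simp add: x pow_v1 pow_v2 pow_v3 pow_s pow_t mult_S S_mult_eq vadd4_def dm_def rho_zero)
  then show ?thesis by blast
qed

lemma conj_closed:
  assumes Qsub: "\<forall>A\<in>Q. A \<subseteq> carrier S_grp"
    and Qgen: "\<forall>A\<in>Q. \<forall>g\<in>set GENS. cj g A \<in> Q"
    and g: "g \<in> carrier S_grp" and A: "A \<in> Q"
  shows "cj g A \<in> Q"
proof -
  interpret S: group S_grp by (rule group_S)
  define M where "M = {g \<in> carrier S_grp. \<forall>A\<in>Q. cj g A \<in> Q}"
  have Mmult: "g \<otimes>\<^bsub>S_grp\<^esub> h \<in> M" if "g \<in> M" "h \<in> M" for g h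
    using that Qsub by (auto simp: M_def cj_mult)
  have Mone: "\<one>\<^bsub>S_grp\<^esub> \<in> M" using Qsub by (auto simp: M_def cj_one)
  have Mgen: "g \<in> M" if "g \<in> set GENS" for g
    using that Qgen GENS_inr inr_carrier by (auto simp: M_def)
  have Mpow: "g [^]\<^bsub>S_grp\<^esub> (n::nat) \<in> M" if "g \<in> M" for g n
    by (induction n) (simp_all add: Mone Mmult that)
  have gens: "((1,0,0),0,0) \<in> M" "((0,1,0),0,0) \<in> M" "((0,0,1),0,0) \<in> M" "((0,0,0),1,0) \<in> M" "((0,0,0),0,1) \<in> M"
    by (auto intro: Mgen simp: GENS_def)
  obtain a b c i j where "g = ((1,0,0),0,0) [^]\<^bsub>S_grp\<^esub> (a::nat) \<otimes>\<^bsub>S_grp\<^esub>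
     (((0,1,0),0,0) [^]\<^bsub>S_grp\<^esub> (b::nat) \<otimes>\<^bsub>S_grp\<^esub>
     (((0,0,1),0,0) [^]\<^bsub>S_grp\<^esub> (c::nat) \<otimes>\<^bsub>S_grp\<^esub>
     (((0,0,0),1,0) [^]\<^bsub>S_grp\<^esub> (i::nat) \<otimes>\<^bsub>S_grp\<^esub> ((0,0,0),0,1) [^]\<^bsub>S_grp\<^esub> (j::nat))))"
    using decomp[OF g] by blast
  then have "g \<in> M" using gens by (simp add: Mmult Mpow)
  then show ?thesis using A by (simp add: M_def)
qed

lemma T_car: "m < 8 \<Longrightarrow> T m \<subseteq> carrier S_grp"
  using T_in subgroups_iso_def subgroup.subset by blast

lemma cjT: assumes "(i,g,gi,j) \<in> set CT" shows "cj g (T i) = T j"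
proof -
  interpret S: group S_grp by (rule group_S)
  have ok: "inr g" "inr gi" "S_mult gi g = ((0,0,0),0,0)" "i < 8" "j < 8"
    "\<forall>x\<in>set (TLL ! i). S_mult g (S_mult x gi) \<in> set (TLL ! j)"
    using CT_ok assms by auto
  have gc: "g \<in> carrier S_grp" "gi \<in> carrier S_grp" using ok inr_carrier by auto
  have inv: "inv\<^bsub>S_grp\<^esub> g = gi" using ok gc by (intro S.inv_equality) (auto simp: mult_S one_S)
  have sub: "cj g (T i) \<subseteq> T j"
    using ok(6) T_eq[OF ok(4)] T_eq[OF ok(5)] by (auto simp: cj_img inv mult_S)
  have "card (cj g (T i)) = 16" using cj_inj[OF gc(1) T_car[OF ok(4)]] T_card[OF ok(4)] by simp
  then show ?thesis using card_subset_eq[OF _ sub] T_card[OF ok(5)] T_eq[OF ok(5)] by simp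
qed

lemma CT_cover: "\<forall>i\<in>set [0..<8]. \<forall>g\<in>set GENS. \<exists>x\<in>set CT. fst x = i \<and> fst (snd x) = g"
  by code_simp

lemma CT_cls: "\<forall>(i,g,gi,j)\<in>set CT. (i \<in> set [0,5] \<longrightarrow> j \<in> set [0,5]) \<and>
   (i \<in> set [1,3,4,6] \<longrightarrow> j \<in> set [1,3,4,6]) \<and> (i \<in> set [2,7] \<longrightarrow> j \<in> set [2,7])"
  by code_simp

lemma cls_closed:
  assumes C: "C \<subseteq> {..<8}" and cl: "\<forall>(i,g,gi,j)\<in>set CT. i \<in> C \<longrightarrow> j \<in> C"
    and i: "i \<in> C" and g: "g \<in> carrier S_grp"
  shows "cj g (T i) \<in> T ` C"
proof (rule conj_closed[OF _ _ g])
  show "\<forall>A\<in>T ` C. A \<subseteq> carrier S_grp" using C T_car by auto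
  show "T i \<in> T ` C" using i by simp
  show "\<forall>A\<in>T ` C. \<forall>g\<in>set GENS. cj g A \<in> T ` C"
  proof (intro ballI)
    fix A g assume A: "A \<in> T ` C" and g: "g \<in> set GENS"
    then obtain k where k: "k \<in> C" "A = T k" by auto
    have "k \<in> set [0..<8]" using k C by auto
    then obtain x where x: "x \<in> set CT" "fst x = k" "fst (snd x) = g" using CT_cover g by blast
    obtain k' g' gi j where xe: "x = (k', g', gi, j)" by (cases x) auto
    then have "(k,g,gi,j) \<in> set CT" using x by simp
    then have "cj g (T k) = T j" "j \<in> C" using cjT cl k by auto
    then show "cj g A \<in> T ` C" using k by simp
  qed
qed

lemma cc_in: "g \<in> carrier S_grp \<Longrightarrow> cj g A \<in> conj_class S_grp A"
  unfolding conj_class_cj by blast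

lemma cc_trans: assumes "B1 \<in> conj_class S_grp B0" "B0 \<subseteq> carrier S_grp"
  shows "conj_class S_grp B1 = conj_class S_grp B0"
proof -
  interpret S: group S_grp by (rule group_S)
  obtain g where g: "g \<in> carrier S_grp" "B1 = cj g B0" using assms(1) by (auto simp: conj_class_cj)
  show ?thesis
  proof
    show "conj_class S_grp B1 \<subseteq> conj_class S_grp B0"
    proof
      fix Z assume "Z \<in> conj_class S_grp B1"
      then obtain h where h: "h \<in> carrier S_grp" "Z = cj h B1" by (auto simp: conj_class_cj)
      then have "Z = cj (h \<otimes>\<^bsub>S_grp\<^esub> g) B0" using g assms(2) by (simp add: cj_mult)
      then show "Z \<in> conj_class S_grp B0" using h g cc_in S.m_closed by simp
    qed
    show "conj_class S_grp B0 \<subseteq> conj_class S_grp B1"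
    proof
      fix Z assume "Z \<in> conj_class S_grp B0"
      then obtain h where h: "h \<in> carrier S_grp" "Z = cj h B0" by (auto simp: conj_class_cj)
      have ig: "inv\<^bsub>S_grp\<^esub> g \<in> carrier S_grp" using g by simp
      have "cj (h \<otimes>\<^bsub>S_grp\<^esub> inv\<^bsub>S_grp\<^esub> g) B1 = cj h (cj (inv\<^bsub>S_grp\<^esub> g) (cj g B0))"
        using g h ig assms(2) cj_carrier by (simp add: cj_mult)
      also have "\<dots> = cj h B0"
        using g ig assms(2) by (simp add: cj_mult[symmetric] cj_one)
      finally show "Z \<in> conj_class S_grp B1" using h ig cc_in S.m_closed g(2) by metis
    qed
  qed
qed

lemma cls_sub:
  assumes "C \<subseteq> {..<8}" "\<forall>(i,g,gi,j)\<in>set CT. i \<in> C \<longrightarrow> j \<in> C" "i \<in> C"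
  shows "conj_class S_grp (T i) \<subseteq> T ` C"
  using cls_closed[OF assms] by (auto simp: conj_class_cj)

definition CA where "CA = T ` set [0,5]"
definition CB where "CB = T ` set [1,3,4,6]"
definition CC where "CC = T ` set [2,7]"

lemma clA: "\<forall>(i,g,gi,j)\<in>set CT. i \<in> set [0,5] \<longrightarrow> j \<in> set [0,5]" using CT_cls by fast
lemma clB: "\<forall>(i,g,gi,j)\<in>set CT. i \<in> set [1,3,4,6] \<longrightarrow> j \<in> set [1,3,4,6]" using CT_cls by fast
lemma clC: "\<forall>(i,g,gi,j)\<in>set CT. i \<in> set [2,7] \<longrightarrow> j \<in> set [2,7]" using CT_cls by fast

abbreviation "v1 \<equiv> ((1,0,0),0,0) :: el"
abbreviation "ss \<equiv> ((0,0,0),1,0) :: el"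

lemma CT_entries:
  "(0, v1, ((3,0,0),0,0), 5) \<in> set CT" "(1, v1, ((3,0,0),0,0), 4) \<in> set CT"
  "(1, ss, ((0,0,0),3,0), 3) \<in> set CT" "(3, v1, ((3,0,0),0,0), 6) \<in> set CT"
  "(2, v1, ((3,0,0),0,0), 7) \<in> set CT"
  by code_simp+

lemma v1_car: "v1 \<in> carrier S_grp" and ss_car: "ss \<in> carrier S_grp"
  by (simp_all add: carrier_S DR_def)

lemma self_in: "m < 8 \<Longrightarrow> T m \<in> conj_class S_grp (T m)"
  using cc_in[of "\<one>\<^bsub>S_grp\<^esub>" "T m"] cj_one[OF T_car] monoid.one_closed[OF group.is_monoid[OF group_S]] by simp

lemma ccA: "conj_class S_grp (T 0) = CA"
proof
  show "conj_class S_grp (T 0) \<subseteq> CA" unfolding CA_def by (rule cls_sub) (use clA in auto)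
  have "T 5 \<in> conj_class S_grp (T 0)" using cc_in[OF v1_car] cjT[OF CT_entries(1)] by metis
  then show "CA \<subseteq> conj_class S_grp (T 0)" using self_in[of 0] by (auto simp: CA_def)
qed

lemma ccB: "conj_class S_grp (T 1) = CB"
proof
  show "conj_class S_grp (T 1) \<subseteq> CB" unfolding CB_def by (rule cls_sub) (use clB in auto)
  have 4: "T 4 \<in> conj_class S_grp (T 1)" using cc_in[OF v1_car] cjT[OF CT_entries(2)] by metis
  have 3: "T 3 \<in> conj_class S_grp (T 1)" using cc_in[OF ss_car] cjT[OF CT_entries(3)] by metis
  have "cj (v1 \<otimes>\<^bsub>S_grp\<^esub> ss) (T 1) = cj v1 (cj ss (T 1))"
    using v1_car ss_car T_car[of 1] by (simp add: cj_mult)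
  also have "\<dots> = T 6" using cjT[OF CT_entries(3)] cjT[OF CT_entries(4)] by simp
  finally have 6: "T 6 \<in> conj_class S_grp (T 1)"
    using cc_in[of "v1 \<otimes>\<^bsub>S_grp\<^esub> ss" "T 1"] monoid.m_closed[OF group.is_monoid[OF group_S] v1_car ss_car]
    by simp
  show "CB \<subseteq> conj_class S_grp (T 1)" using self_in[of 1] 3 4 6 by (auto simp: CB_def)
qed

lemma ccC: "conj_class S_grp (T 2) = CC"
proof
  show "conj_class S_grp (T 2) \<subseteq> CC" unfolding CC_def by (rule cls_sub) (use clC in auto)
  have "T 7 \<in> conj_class S_grp (T 2)" using cc_in[OF v1_car] cjT[OF CT_entries(5)] by metis
  then show "CC \<subseteq> conj_class S_grp (T 2)" using self_in[of 2] by (auto simp: CC_def)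
qed

lemma cc_all: "conj_class S_grp ` T ` {..<8} = {CA, CB, CC}"
proof -
  have A: "conj_class S_grp (T i) = CA" if "i \<in> set [0,5]" for i
  proof -
    have "T i \<in> conj_class S_grp (T 0)" using that ccA by (auto simp: CA_def)
    moreover have "T 0 \<subseteq> carrier S_grp" by (rule T_car) simp
    ultimately show ?thesis using cc_trans ccA by metis
  qed
  have B: "conj_class S_grp (T i) = CB" if "i \<in> set [1,3,4,6]" for i
  proof -
    have "T i \<in> conj_class S_grp (T 1)" using that ccB by (auto simp: CB_def)
    moreover have "T 1 \<subseteq> carrier S_grp" by (rule T_car) simp
    ultimately show ?thesis using cc_trans ccB by metis
  qed
  have C: "conj_class S_grp (T i) = CC" if "i \<in> set [2,7]" for i
  proof -
    have "T i \<in> conj_class S_grp (T 2)" using that ccC by (auto simp: CC_def)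
    moreover have "T 2 \<subseteq> carrier S_grp" by (rule T_car) simp
    ultimately show ?thesis using cc_trans ccC by metis
  qed
  have e: "{..<8::nat} = {0,1,2,3,4,5,6,7}" by auto
  show ?thesis unfolding e using A B C by auto
qed

lemma card_T_img: "S \<subseteq> {..<8} \<Longrightarrow> card (T ` S) = card S"
  using T_inj by (meson card_image inj_on_subset)

lemma cardA: "card CA = 2" unfolding CA_def by (subst card_T_img) auto
lemma cardB: "card CB = 4" unfolding CB_def by (subst card_T_img) auto
lemma cardC: "card CC = 2" unfolding CC_def by (subst card_T_img) auto

lemma AC: "CA \<noteq> CC"
proof
  assume "CA = CC"
  then have "T 0 \<in> T ` set [2,7]" by (auto simp: CA_def CC_def)
  then obtain k where "k \<in> set [2::nat,7]" "T 0 = T k" by auto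
  then show False using inj_onD[OF T_inj, of 0 k] by auto
qed

theorem corollary2p4:
  shows "subgroups_iso S_grp (elem_ab2 5) = {}
       \<and> card (subgroups_iso S_grp (elem_ab2 4)) = 8
       \<and> image_mset card (mset_set (conj_class S_grp ` subgroups_iso S_grp (elem_ab2 4)))
           = {#2, 2, 4#}"
proof (intro conjI)
  show "subgroups_iso S_grp (elem_ab2 5) = {}" by (rule SI5)
  show "card (subgroups_iso S_grp (elem_ab2 4)) = 8" unfolding SI4 by (subst card_T_img) auto
  have AB: "CA \<noteq> CB" using cardA cardB by auto
  have BC: "CB \<noteq> CC" using cardB cardC by auto
  have d: "distinct [CA, CB, CC]" using AB BC AC by simp
  have "mset_set (conj_class S_grp ` subgroups_iso S_grp (elem_ab2 4)) = mset [CA, CB, CC]"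
    unfolding SI4 cc_all using mset_set_set[OF d] by simp
  then show "image_mset card (mset_set (conj_class S_grp ` subgroups_iso S_grp (elem_ab2 4))) = {#2, 2, 4#}"
    by (simp add: cardA cardB cardC add_mset_commute)
qed

end
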